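(* Let $\mathfrak g$ be an $n$-dimensional filiform Lie algebra with associated triple $(z_1,n-2,n)$, $z_1<n-2$, with parameters $\alpha_1,\dots,\alpha_{n-z_1-1},\gamma_1,\beta_{k,2}$ with respect to an adapted basis, and let $p=\lfloor(n-z_1-1)/2\rfloor$. Then there exists an adapted basis $\{f_1,\dots,f_n\}$ of $\mathfrak g$ in which the law is: $[f_1,f_h]=f_{h-1}$ ($3\le h\le n$); $[f_{z_1},f_n]=f_2$; $[f_{z_1+i},f_{n-1}]=0$ for $0\le i<p$; $[f_{z_1+i},f_{n-1}]=\frac{\alpha_{p+1}}{\gamma_1}f_{i-p+2}+\frac{\alpha_{p+2}}{\gamma_1}f_{i-p+1}+\dots+\frac{\alpha_{i+1}}{\gamma_1}f_2$ for $p\le i\le n-2-z_1$; $[f_{z_1+k},f_n]=\sum_{h=2}^{k+2}\overline P_h([f_{z_1+k-1},f_n]+[f_{z_1+k},f_{n-1}])f_{h+1}+\frac{\beta_{k,2}}{\gamma_1}f_2$ for $1\le k\le n-z_1-1$, where $\overline P_h$ is the $h$-th coordinate with respect to $\{f_h\}$; all other brackets $[f_a,f_b]$, $2\le a<b\le n$, are zero. (Equivalently, the parameters with respect to $\{f_h\}$ are $\gamma_1^{-1}$ times the original ones, so that the new $\gamma_1$ equals $1$.)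
   Context: All Lie algebras are over $\mathbb C$; $C^1\mathfrak g=\mathfrak g$, $C^k\mathfrak g=[C^{k-1}\mathfrak g,\mathfrak g]$. A Lie algebra is filiform if $\dim\mathfrak g=n\ge2$ and $\dim C^k\mathfrak g=n-k$ for $2\le k\le n$. An adapted basis of a filiform $\mathfrak g$ is a basis $\{e_1,\dots,e_n\}$ with $[e_1,e_h]=e_{h-1}$ ($3\le h\le n$), $[e_2,e_h]=0$ ($1\le h\le n$), $[e_3,e_h]=0$ ($2\le h\le n$). For non-model filiform $\mathfrak g$, $z_1=\min\{k\ge4:[e_k,e_n]\ne0\}$, $z_2=\min\{k\ge4:[e_k,e_{k+1}]\ne0\}$ (in any adapted basis) are invariants; $(z_1,z_2,n)$ is the associated triple. $P_h(u)$ is the $h$-th coordinate of $u$ in the basis $\{e_h\}$. General law when $z_2=n-2$ (known result): there exist complex numbers $\alpha_1,\dots,\alpha_{n-z_1-1}$, $\gamma_1$, $\beta_{k,2}$ ($1\le k<n-z_1$), the parameters, such that $[e_1,e_h]=e_{h-1}$ ($3\le h\le n$); $[e_{z_1+i},e_{n-1}]=\alpha_1e_{i+2}+\dots+\alpha_{i+1}e_2$ ($0\le i\le n-2-z_1$); $[e_{z_1},e_n]=\alpha_1e_3+\gamma_1e_2$; $[e_{z_1+k},e_n]=\sum_{h=2}^{k+2}P_h([e_{z_1+k-1},e_n]+[e_{z_1+k},e_{n-1}])e_{h+1}+\beta_{k,2}e_2$ ($1\le k<n-z_1$); all other brackets $[e_a,e_b]$, $2\le a<b\le n$, are zero. It is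 known (for this triple) that $\alpha_1=\dots=\alpha_p=0$ and $\gamma_1\ne0$. *)

theory Defs
  imports Complex_Main
begin

definition lie_algebra :: "(complex \<Rightarrow> 'v::ab_group_add \<Rightarrow> 'v) \<Rightarrow> ('v \<Rightarrow> 'v \<Rightarrow> 'v) \<Rightarrow> bool" where
  "lie_algebra sc br \<longleftrightarrow>
     vector_space sc \<and>
     (\<forall>x. Vector_Spaces.linear sc sc (br x)) \<and>
     (\<forall>y. Vector_Spaces.linear sc sc (\<lambda>x. br x y)) \<and>
     (\<forall>x. br x x = 0) \<and>
     (\<forall>x y z. br x (br y z) + br y (br z x) + br z (br x y) = 0)"

text \<open>Lower central series: lcs 1 = g, lcs k = [lcs (k-1), g] (span of brackets).
 (lcs 0 is also set to g; it is never used.)\<close>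

fun lcs :: "(complex \<Rightarrow> 'v::ab_group_add \<Rightarrow> 'v) \<Rightarrow> ('v \<Rightarrow> 'v \<Rightarrow> 'v) \<Rightarrow> nat \<Rightarrow> 'v set" where
  "lcs sc br 0 = UNIV"
| "lcs sc br (Suc 0) = UNIV"
| "lcs sc br (Suc (Suc k)) = module.span sc {br x y | x y. x \<in> lcs sc br (Suc k)}"

definition filiform :: "(complex \<Rightarrow> 'v::ab_group_add \<Rightarrow> 'v) \<Rightarrow> ('v \<Rightarrow> 'v \<Rightarrow> 'v) \<Rightarrow> nat \<Rightarrow> bool" where
  "filiform sc br n \<longleftrightarrow> n \<ge> 2 \<and> vector_space.dim sc (UNIV :: 'v set) = n \<and>
     (\<forall>k. 2 \<le> k \<and> k \<le> n \<longrightarrow> vector_space.dim sc (lcs sc br k) = n - k)"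

definition is_basis :: "(complex \<Rightarrow> 'v::ab_group_add \<Rightarrow> 'v) \<Rightarrow> nat \<Rightarrow> (nat \<Rightarrow> 'v) \<Rightarrow> bool" where
  "is_basis sc n e \<longleftrightarrow> inj_on e {1..n} \<and> \<not> module.dependent sc (e ` {1..n}) \<and>
     module.span sc (e ` {1..n}) = UNIV"

definition adapted_basis :: "(complex \<Rightarrow> 'v::ab_group_add \<Rightarrow> 'v) \<Rightarrow> ('v \<Rightarrow> 'v \<Rightarrow> 'v) \<Rightarrow> nat \<Rightarrow> (nat \<Rightarrow> 'v) \<Rightarrow> bool" where
  "adapted_basis sc br n e \<longleftrightarrow> is_basis sc n e \<and>
     (\<forall>h. 3 \<le> h \<and> h \<le> n \<longrightarrow> br (e 1) (e h) = e (h - 1)) \<and>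
     (\<forall>h. 1 \<le> h \<and> h \<le> n \<longrightarrow> br (e 2) (e h) = 0) \<and>
     (\<forall>h. 2 \<le> h \<and> h \<le> n \<longrightarrow> br (e 3) (e h) = 0)"

definition coord :: "(complex \<Rightarrow> 'v::ab_group_add \<Rightarrow> 'v) \<Rightarrow> nat \<Rightarrow> (nat \<Rightarrow> 'v) \<Rightarrow> nat \<Rightarrow> 'v \<Rightarrow> complex" where
  "coord sc n e h u = module.representation sc (e ` {1..n}) u (e h)"

definition has_triple :: "('v::ab_group_add \<Rightarrow> 'v \<Rightarrow> 'v) \<Rightarrow> nat \<Rightarrow> (nat \<Rightarrow> 'v) \<Rightarrow> nat \<Rightarrow> nat \<Rightarrow> bool" where
  "has_triple br n e z1 z2 \<longleftrightarrow>
     4 \<le> z1 \<and> br (e z1) (e n) \<noteq> 0 \<and> (\<forall>k. 4 \<le> k \<and> k < z1 \<longrightarrow> br (e k) (e n) = 0) \<and>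
     4 \<le> z2 \<and> br (e z2) (e (z2 + 1)) \<noteq> 0 \<and> (\<forall>k. 4 \<le> k \<and> k < z2 \<longrightarrow> br (e k) (e (k + 1)) = 0)"

text \<open>The general law for z2 = n - 2 in the basis e with parameters
 alpha_1.., gamma_1, beta_{k,2} (beta k stands for beta_{k,2}).\<close>

definition law_z2 :: "(complex \<Rightarrow> 'v::ab_group_add \<Rightarrow> 'v) \<Rightarrow> ('v \<Rightarrow> 'v \<Rightarrow> 'v) \<Rightarrow> nat \<Rightarrow> (nat \<Rightarrow> 'v) \<Rightarrow> nat
     \<Rightarrow> (nat \<Rightarrow> complex) \<Rightarrow> complex \<Rightarrow> (nat \<Rightarrow> complex) \<Rightarrow> bool" where
  "law_z2 sc br n e z1 \<alpha> \<gamma>1 \<beta> \<longleftrightarrow>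
     (\<forall>h. 3 \<le> h \<and> h \<le> n \<longrightarrow> br (e 1) (e h) = e (h - 1)) \<and>
     (\<forall>i. i \<le> n - 2 - z1 \<longrightarrow>
        br (e (z1 + i)) (e (n - 1)) = (\<Sum>j = 0..i. sc (\<alpha> (j + 1)) (e (i + 2 - j)))) \<and>
     br (e z1) (e n) = sc (\<alpha> 1) (e 3) + sc \<gamma>1 (e 2) \<and>
     (\<forall>k. 1 \<le> k \<and> k < n - z1 \<longrightarrow>
        br (e (z1 + k)) (e n) =
          (\<Sum>h = 2..k + 2. sc (coord sc n e h (br (e (z1 + k - 1)) (e n) + br (e (z1 + k)) (e (n - 1))))
                              (e (h + 1))) + sc (\<beta> k) (e 2)) \<and>
     (\<forall>a b. 2 \<le> a \<and> a < b \<and> b \<le> n \<and>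
        \<not> (b = n - 1 \<and> z1 \<le> a \<and> a \<le> n - 2) \<and> \<not> (b = n \<and> z1 \<le> a \<and> a < n) \<longrightarrow>
        br (e a) (e b) = 0)"

end

theory Submission
  imports Defs
begin


context vector_space
begin

lemma rep_scale_basis:
  assumes ind: "independent (e ` S)" and inj: "inj_on e S" and a: "a \<in> S" and k: "k \<in> S"
  shows "representation (e ` S) (c *s e a) (e k) = (if k = a then c else 0)"
proof -
  have "representation (e ` S) (c *s e a) = (\<lambda>b. c * representation (e ` S) (e a) b)"
    by (rule representation_scale[OF ind]) (simp add: a span_base)
  also have "\<dots> = (\<lambda>b. c * (if b = e a then 1 else 0))"
    using representation_basis[OF ind] a by simp
  finally show ?thesis using inj a k by (auto simp: inj_on_eq_iff)
qed

lemma rep_sum_basis: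
  assumes ind: "independent (e ` S)" and inj: "inj_on e S" and fin: "finite S" and k: "k \<in> S"
  shows "representation (e ` S) (\<Sum>h\<in>S. c h *s e h) (e k) = c k"
proof -
  have "representation (e ` S) (\<Sum>h\<in>S. c h *s e h) = (\<lambda>b. \<Sum>h\<in>S. representation (e ` S) (c h *s e h) b)"
    by (rule representation_sum[OF ind]) (auto intro: span_scale span_base)
  then have "representation (e ` S) (\<Sum>h\<in>S. c h *s e h) (e k) = (\<Sum>h\<in>S. if k = h then c h else 0)"
    using rep_scale_basis[OF ind inj _ k] by simp
  also have "\<dots> = c k" using fin k by simp
  finally show ?thesis .
qed

lemma sum_rep_basis:
  assumes ind: "independent (e ` S)" and inj: "inj_on e S" and fin: "finite S" and sp: "span (e ` S) = UNIV"
  shows "(\<Sum>h\<in>S. representation (e ` S) u (e h) *s e h) = u"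
proof -
  have "(\<Sum>b\<in>e ` S. representation (e ` S) u b *s b) = u"
    by (rule sum_representation_eq[OF ind]) (auto simp: sp fin)
  then show ?thesis by (simp add: sum.reindex[OF inj])
qed

end

theorem mainTheorem7:
  fixes sc :: "complex \<Rightarrow> 'v::ab_group_add \<Rightarrow> 'v"
    and br :: "'v \<Rightarrow> 'v \<Rightarrow> 'v"
    and n z1 p :: nat
    and e :: "nat \<Rightarrow> 'v"
    and \<alpha> \<beta> :: "nat \<Rightarrow> complex" and \<gamma>1 :: complex
  assumes lie: "lie_algebra sc br"
    and fil: "filiform sc br n"
    and adapted: "adapted_basis sc br n e"
    and triple: "has_triple br n e z1 (n - 2)"
    and z1_lt: "z1 < n - 2"
    and law: "law_z2 sc br n e z1 \<alpha> \<gamma>1 \<beta>"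
    and p_def: "p = (n - z1 - 1) div 2"
    and known_alpha: "\<forall>j. 1 \<le> j \<and> j \<le> p \<longrightarrow> \<alpha> j = 0"
    and known_gamma: "\<gamma>1 \<noteq> 0"
  shows "\<exists>f. adapted_basis sc br n f \<and>
     (\<forall>h. 3 \<le> h \<and> h \<le> n \<longrightarrow> br (f 1) (f h) = f (h - 1)) \<and>
     br (f z1) (f n) = f 2 \<and>
     (\<forall>i. i < p \<longrightarrow> br (f (z1 + i)) (f (n - 1)) = 0) \<and>
     (\<forall>i. p \<le> i \<and> i \<le> n - 2 - z1 \<longrightarrow>
        br (f (z1 + i)) (f (n - 1)) = (\<Sum>j = p..i. sc (\<alpha> (j + 1) / \<gamma>1) (f (i + 2 - j)))) \<and>
     (\<forall>k. 1 \<le> k \<and> k \<le> n - z1 - 1 \<longrightarrow>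
        br (f (z1 + k)) (f n) =
          (\<Sum>h = 2..k + 2. sc (coord sc n f h (br (f (z1 + k - 1)) (f n) + br (f (z1 + k)) (f (n - 1))))
                              (f (h + 1))) + sc (\<beta> k / \<gamma>1) (f 2)) \<and>
     (\<forall>a b. 2 \<le> a \<and> a < b \<and> b \<le> n \<and>
        \<not> (b = n - 1 \<and> z1 \<le> a \<and> a \<le> n - 2) \<and> \<not> (b = n \<and> z1 \<le> a \<and> a < n) \<longrightarrow>
        br (f a) (f b) = 0)"
proof -
  interpret vector_space sc using lie unfolding lie_algebra_def by auto
  have linl: "\<And>x. Vector_Spaces.linear sc sc (br x)" and linr: "\<And>y. Vector_Spaces.linear sc sc (\<lambda>x. br x y)"
    using lie unfolding lie_algebra_def by auto
  have brsc_r: "br x (sc c y) = sc c (br x y)" for x y c using linl[of x] unfolding Vector_Spaces.linear_iff by blast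
  have brsc_l: "br (sc c x) y = sc c (br x y)" for x y c using linr[of y] unfolding Vector_Spaces.linear_iff by blast
  have bE: "is_basis sc n e" and ad1: "\<And>h. 3 \<le> h \<and> h \<le> n \<longrightarrow> br (e 1) (e h) = e (h - 1)"
    and ad2: "\<And>h. 1 \<le> h \<and> h \<le> n \<longrightarrow> br (e 2) (e h) = 0"
    and ad3: "\<And>h. 2 \<le> h \<and> h \<le> n \<longrightarrow> br (e 3) (e h) = 0"
    using adapted unfolding adapted_basis_def by auto
  let ?E = "e ` {1..n}"
  have injE: "inj_on e {1..n}" and indE: "independent ?E" and spE: "span ?E = UNIV"
    using bE unfolding is_basis_def by auto
  have z1ge: "4 \<le> z1" using triple unfolding has_triple_def by auto
  have nge: "z1 + 3 \<le> n" using z1_lt by linarith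
  have pge: "1 \<le> p" using p_def nge by auto
  have ple: "p \<le> n - 2 - z1" using p_def nge by auto
  have L1: "\<And>i. i \<le> n - 2 - z1 \<longrightarrow> br (e (z1 + i)) (e (n - 1)) = (\<Sum>j = 0..i. sc (\<alpha> (j + 1)) (e (i + 2 - j)))"
    and L2: "br (e z1) (e n) = sc (\<alpha> 1) (e 3) + sc \<gamma>1 (e 2)"
    and L3: "\<And>k. 1 \<le> k \<and> k < n - z1 \<longrightarrow>
        br (e (z1 + k)) (e n) =
          (\<Sum>h = 2..k + 2. sc (coord sc n e h (br (e (z1 + k - 1)) (e n) + br (e (z1 + k)) (e (n - 1))))
                              (e (h + 1))) + sc (\<beta> k) (e 2)"
    and L4: "\<And>a b. 2 \<le> a \<and> a < b \<and> b \<le> n \<and>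
        \<not> (b = n - 1 \<and> z1 \<le> a \<and> a \<le> n - 2) \<and> \<not> (b = n \<and> z1 \<le> a \<and> a < n) \<longrightarrow>
        br (e a) (e b) = 0"
    using law unfolding law_z2_def by blast+
  define s where "s h = (if h = 1 then 1 else 1/\<gamma>1)" for h :: nat
  define f where "f h = sc (s h) (e h)" for h
  have s_nz: "s h \<noteq> 0" for h using known_gamma by (simp add: s_def)
  have e_f: "e h = sc (1 / s h) (f h)" for h using s_nz[of h] by (simp add: f_def)
  have f_ge2: "2 \<le> h \<Longrightarrow> f h = sc (1/\<gamma>1) (e h)" for h by (simp add: f_def s_def)
  have f1: "f 1 = e 1" by (simp add: f_def s_def)
  have brf: "br (f a) (f b) = sc (s a * s b) (br (e a) (e b))" for a b
    by (simp add: f_def brsc_l brsc_r mult.commute)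
  have brf2: "2 \<le> a \<Longrightarrow> 2 \<le> b \<Longrightarrow> br (f a) (f b) = sc (1/(\<gamma>1*\<gamma>1)) (br (e a) (e b))" for a b
    by (simp add: brf s_def)
  let ?F = "f ` {1..n}"
  have injF: "inj_on f {1..n}"
  proof (rule inj_onI)
    fix a b assume a: "a \<in> {1..n}" and b: "b \<in> {1..n}" and eq: "f a = f b"
    have "representation ?E (sc (s a) (e a)) (e a) = representation ?E (sc (s b) (e b)) (e a)"
      using eq by (simp add: f_def)
    then have "(if a = a then s a else 0) = (if a = b then s b else 0)"
      using rep_scale_basis[OF indE injE a a, of "s a"] rep_scale_basis[OF indE injE b a, of "s b"] by simp
    then show "a = b" using s_nz[of a] by (auto split: if_splits)
  qed
  have "?E \<subseteq> span ?F"
  proof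
    fix x assume "x \<in> ?E"
    then obtain h where h: "h \<in> {1..n}" "x = e h" by auto
    show "x \<in> span ?F" unfolding h(2) e_f[of h] by (intro span_scale span_base) (use h in auto)
  qed
  then have "span ?E \<subseteq> span ?F" using span_mono span_span by metis
  then have spF: "span ?F = UNIV" using spE by auto
  have cardE: "card ?E = n" using card_image[OF injE] by simp
  have cardF: "card ?F = n" using card_image[OF injF] by simp
  have dimU: "dim (UNIV :: 'v set) = n" using dim_eq_card[of ?E UNIV] spE indE cardE by simp
  interpret fd: finite_dimensional_vector_space sc ?E
    by unfold_locales (use indE spE in blast)+
  have indF: "independent ?F"
  proof (rule fd.card_le_dim_spanning[of ?F UNIV])
    show "UNIV \<subseteq> span ?F" using spF by blast
    show "card ?F \<le> dim (UNIV :: 'v set)" using dimU cardF by (metis order_refl)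
  qed auto
  have bF: "is_basis sc n f" unfolding is_basis_def using injF indF spF by auto
  have adF: "adapted_basis sc br n f"
    unfolding adapted_basis_def
  proof (intro conjI allI impI bF)
    fix h assume h: "3 \<le> h \<and> h \<le> n"
    have "br (f 1) (f h) = sc (s 1 * s h) (br (e 1) (e h))" by (rule brf)
    also have "\<dots> = sc (1/\<gamma>1) (e (h - 1))" using h ad1[of h] by (simp add: s_def)
    also have "\<dots> = f (h - 1)" using h f_ge2[of "h - 1"] by (metis (no_types) Suc_1 Suc_le_mono diff_Suc_1 eval_nat_numeral(3) le_Suc_eq le_diff_conv2 numeral_le_one_iff semiring_norm(70) one_le_numeral le_trans)
    finally show "br (f 1) (f h) = f (h - 1)" .
  next
    fix h assume h: "1 \<le> h \<and> h \<le> n"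
    then show "br (f 2) (f h) = 0" using ad2[of h] by (simp add: brf)
  next
    fix h assume h: "2 \<le> h \<and> h \<le> n"
    then show "br (f 3) (f h) = 0" using ad3[of h] by (simp add: brf)
  qed
  have coordE_scale: "coord sc n e h (sc c u) = c * coord sc n e h u" for h c u
    unfolding coord_def using representation_scale[OF indE, of u c] spE by simp
  have coordF: "coord sc n f h u = coord sc n e h u / s h" if h: "h \<in> {1..n}" for h u
  proof -
    have "u = (\<Sum>k\<in>{1..n}. sc (coord sc n e k u) (e k))"
      unfolding coord_def using sum_rep_basis[OF indE injE _ spE] by simp
    also have "\<dots> = (\<Sum>k\<in>{1..n}. sc (coord sc n e k u / s k) (f k))"
      by (intro sum.cong refl) (simp add: f_def s_nz)
    finally have "coord sc n f h u = coord sc n f h (\<Sum>k\<in>{1..n}. sc (coord sc n e k u / s k) (f k))" by simp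
    also have "\<dots> = coord sc n e h u / s h"
      unfolding coord_def[of sc n f] using rep_sum_basis[OF indF injF _ h] by simp
    finally show ?thesis .
  qed
  show ?thesis
  proof (intro exI[of _ f] conjI allI impI adF)
    fix h assume "3 \<le> h \<and> h \<le> n"
    then show "br (f 1) (f h) = f (h - 1)" using adF unfolding adapted_basis_def by blast
  next
    have "\<alpha> 1 = 0" using known_alpha pge by auto
    then have "br (f z1) (f n) = sc (1/(\<gamma>1*\<gamma>1)) (sc \<gamma>1 (e 2))"
      using z1ge nge L2 brf2[of z1 n] by simp
    also have "\<dots> = sc (1/\<gamma>1) (e 2)" using known_gamma by simp
    also have "\<dots> = f 2" using f_ge2[of 2] by simp
    finally show "br (f z1) (f n) = f 2" .
  next
    fix i assume i: "i < p"
    have "br (e (z1 + i)) (e (n - 1)) = (\<Sum>j = 0..i. sc (\<alpha> (j + 1)) (e (i + 2 - j)))"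
      using L1[of i] i ple by auto
    also have "\<dots> = 0" using known_alpha i by (intro sum.neutral) auto
    finally show "br (f (z1 + i)) (f (n - 1)) = 0" using z1ge nge by (simp add: brf2)
  next
    fix i assume i: "p \<le> i \<and> i \<le> n - 2 - z1"
    have "br (e (z1 + i)) (e (n - 1)) = (\<Sum>j = 0..i. sc (\<alpha> (j + 1)) (e (i + 2 - j)))"
      using L1[of i] i by auto
    also have "\<dots> = (\<Sum>j = p..i. sc (\<alpha> (j + 1)) (e (i + 2 - j)))"
    proof -
      have "{0..i} = {0..<p} \<union> {p..i}" using i by auto
      then have "(\<Sum>j = 0..i. sc (\<alpha> (j + 1)) (e (i + 2 - j))) =
          (\<Sum>j \<in> {0..<p}. sc (\<alpha> (j + 1)) (e (i + 2 - j))) + (\<Sum>j = p..i. sc (\<alpha> (j + 1)) (e (i + 2 - j)))"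
        by (simp add: sum.union_disjoint ivl_disj_int)
      moreover have "(\<Sum>j \<in> {0..<p}. sc (\<alpha> (j + 1)) (e (i + 2 - j))) = 0"
        using known_alpha by (intro sum.neutral) auto
      ultimately show ?thesis by simp
    qed
    finally have "br (f (z1 + i)) (f (n - 1)) = sc (1/(\<gamma>1*\<gamma>1)) (\<Sum>j = p..i. sc (\<alpha> (j + 1)) (e (i + 2 - j)))"
      using z1ge nge by (simp add: brf2)
    also have "\<dots> = (\<Sum>j = p..i. sc (\<alpha> (j + 1) / \<gamma>1) (f (i + 2 - j)))"
      unfolding scale_sum_right
    proof (intro sum.cong refl)
      fix j assume "j \<in> {p..i}"
      then have "2 \<le> i + 2 - j" by auto
      then show "sc (1/(\<gamma>1*\<gamma>1)) (sc (\<alpha> (j + 1)) (e (i + 2 - j))) = sc (\<alpha> (j + 1) / \<gamma>1) (f (i + 2 - j))"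
        by (simp add: f_ge2)
    qed
    finally show "br (f (z1 + i)) (f (n - 1)) = (\<Sum>j = p..i. sc (\<alpha> (j + 1) / \<gamma>1) (f (i + 2 - j)))" .
  next
    fix k assume k: "1 \<le> k \<and> k \<le> n - z1 - 1"
    define X where "X = br (e (z1 + k - 1)) (e n) + br (e (z1 + k)) (e (n - 1))"
    define c where "c = 1/(\<gamma>1*\<gamma>1)"
    have Y: "br (f (z1 + k - 1)) (f n) + br (f (z1 + k)) (f (n - 1)) = sc c X"
      using z1ge nge by (simp add: brf2 X_def c_def scale_right_distrib)
    have cf: "coord sc n f h (sc c X) = \<gamma>1 * (c * coord sc n e h X)" if h: "h \<in> {2..k+2}" for h
    proof -
      have "h \<in> {1..n}" using h k nge z1ge by (simp add: atLeastAtMost_iff) arith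
      then show ?thesis using h by (simp add: coordF coordE_scale s_def)
    qed
    have "br (f (z1 + k)) (f n) = sc c (br (e (z1 + k)) (e n))"
      using z1ge nge by (simp add: brf2 c_def)
    also have "\<dots> = sc c ((\<Sum>h = 2..k + 2. sc (coord sc n e h X) (e (h + 1))) + sc (\<beta> k) (e 2))"
      using L3[of k] k unfolding X_def by auto
    also have "\<dots> = (\<Sum>h = 2..k + 2. sc (coord sc n f h (sc c X)) (f (h + 1))) + sc (\<beta> k / \<gamma>1) (f 2)"
    proof -
      have "sc c (\<Sum>h = 2..k + 2. sc (coord sc n e h X) (e (h + 1))) =
            (\<Sum>h = 2..k + 2. sc (coord sc n f h (sc c X)) (f (h + 1)))"
        unfolding scale_sum_right
      proof (intro sum.cong refl)
        fix h assume h: "h \<in> {2..k+2}"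
        have "sc (coord sc n f h (sc c X)) (f (h + 1)) = sc (\<gamma>1 * (c * coord sc n e h X) * (1/\<gamma>1)) (e (h + 1))"
          using h by (simp add: cf f_ge2)
        also have "\<gamma>1 * (c * coord sc n e h X) * (1/\<gamma>1) = c * coord sc n e h X"
          using known_gamma by (simp add: field_simps)
        finally show "sc c (sc (coord sc n e h X) (e (h + 1))) = sc (coord sc n f h (sc c X)) (f (h + 1))"
          by simp
      qed
      moreover have "sc c (sc (\<beta> k) (e 2)) = sc (\<beta> k / \<gamma>1) (f 2)"
        by (simp add: f_ge2 c_def field_simps)
      ultimately show ?thesis by (simp add: scale_right_distrib)
    qed
    finally show "br (f (z1 + k)) (f n) =
          (\<Sum>h = 2..k + 2. sc (coord sc n f h (br (f (z1 + k - 1)) (f n) + br (f (z1 + k)) (f (n - 1))))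
                              (f (h + 1))) + sc (\<beta> k / \<gamma>1) (f 2)" unfolding Y .
  next
    fix a b assume ab: "2 \<le> a \<and> a < b \<and> b \<le> n \<and>
        \<not> (b = n - 1 \<and> z1 \<le> a \<and> a \<le> n - 2) \<and> \<not> (b = n \<and> z1 \<le> a \<and> a < n)"
    then have "br (e a) (e b) = 0" using L4[of a b] by blast
    then show "br (f a) (f b) = 0" using ab brf2[of a b] by simp
  qed
qed

end
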